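(* Let $\alpha>0$, $A\ge0$, $B>0$, $t>0$, and let $P_n(x,t)$ be the monic polynomials orthogonal on $[0,\infty)$ w.r.t. $w(x,t)=x^\alpha e^{-x}(A+B\theta(x-t))$, with norms $h_n(t)$. Let $R_n(t)=Bt^\alpha e^{-t}\{P_n(t,t)\}^2/h_n(t)$ and $r_n(t)=Bt^\alpha e^{-t}P_n(t,t)P_{n-1}(t,t)/h_{n-1}(t)$. Then for fixed $n\ge1$ $$tR_n'(t)=2r_n+(2n+\alpha-t+tR_n)R_n.$$
   Context: $\theta$ is the Heaviside function ($1$ for $x>0$, $0$ otherwise); $P_n(t,t)$ is $P_n(x,t)$ at $x=t$; prime denotes $d/dt$. *)

theory Defs
  imports "HOL-Analysis.Analysis" "HOL-Computational_Algebra.Polynomial"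
begin

definition heaviside :: "real \<Rightarrow> real" where
  "heaviside x = (if x > 0 then 1 else 0)"

definition wgt :: "real \<Rightarrow> real \<Rightarrow> real \<Rightarrow> real \<Rightarrow> real \<Rightarrow> real" where
  "wgt \<alpha> A B t x = x powr \<alpha> * exp (- x) * (A + B * heaviside (x - t))"

definition is_monic_orth :: "real \<Rightarrow> real \<Rightarrow> real \<Rightarrow> real \<Rightarrow> nat \<Rightarrow> real poly \<Rightarrow> bool" where
  "is_monic_orth \<alpha> A B t n p \<longleftrightarrow>
     degree p = n \<and> lead_coeff p = 1 \<and>
     (\<forall>q :: real poly. degree q < n \<longrightarrow>
        (LINT x:{0..}|lborel. poly p x * poly q x * wgt \<alpha> A B t x) = 0)"

definition Pn :: "real \<Rightarrow> real \<Rightarrow> real \<Rightarrow> nat \<Rightarrow> real \<Rightarrow> real poly" where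
  "Pn \<alpha> A B n t = (THE p. is_monic_orth \<alpha> A B t n p)"

definition hn :: "real \<Rightarrow> real \<Rightarrow> real \<Rightarrow> nat \<Rightarrow> real \<Rightarrow> real" where
  "hn \<alpha> A B n t = (LINT x:{0..}|lborel. (poly (Pn \<alpha> A B n t) x)\<^sup>2 * wgt \<alpha> A B t x)"

definition Rn :: "real \<Rightarrow> real \<Rightarrow> real \<Rightarrow> nat \<Rightarrow> real \<Rightarrow> real" where
  "Rn \<alpha> A B n t = B * t powr \<alpha> * exp (- t) * (poly (Pn \<alpha> A B n t) t)\<^sup>2 / hn \<alpha> A B n t"

definition rn :: "real \<Rightarrow> real \<Rightarrow> real \<Rightarrow> nat \<Rightarrow> real \<Rightarrow> real" where
  "rn \<alpha> A B n t = B * t powr \<alpha> * exp (- t) * poly (Pn \<alpha> A B n t) t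
       * poly (Pn \<alpha> A B (n - 1) t) t / hn \<alpha> A B (n - 1) t"

end

theory Submission
  imports Defs "HOL-Real_Asymp.Real_Asymp"
begin



definition E :: "real \<Rightarrow> real \<Rightarrow> real" where
  "E m a = (LINT x:{a<..}|lborel. x powr m * exp (- x))"

lemma EI:
  fixes m a :: real
  assumes "0 < m" "0 \<le> a"
  shows "set_integrable lborel {a<..} (\<lambda>x. x powr m * exp (- x))"
proof -
  have "(\<lambda>t::real. t powr m / exp t) integrable_on {0..}"
    using Gamma_integral_real[of "m+1"] assms by (auto simp: integrable_on_def)
  hence "(\<lambda>t. t powr m / exp t) absolutely_integrable_on {0..}"
    by (rule nonnegative_absolutely_integrable_1) auto
  hence "(\<lambda>t. t powr m / exp t) absolutely_integrable_on {a<..}"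
    by (rule set_integrable_subset) (use assms in auto)
  hence "integrable lebesgue (\<lambda>x. indicator {a<..} x *\<^sub>R (x powr m / exp x))"
    by (simp add: set_integrable_def)
  hence "integrable lborel (\<lambda>x. indicator {a<..} x *\<^sub>R (x powr m / exp x))"
    by (subst (asm) integrable_completion) auto
  thus ?thesis by (simp add: set_integrable_def exp_minus field_simps)
qed

lemma E_rec:
  fixes m a :: real
  assumes "0 < m" "0 \<le> a"
  shows "E (m+1) a = a powr (m+1) * exp (-a) + (m+1) * E m a"
proof -
  define F where "F x = - (x powr (m+1) * exp (-x))" for x :: real
  define f where "f x = x powr (m+1) * exp (-x) - (m+1) * (x powr m * exp (-x))" for x :: real
  have int1: "set_integrable lborel {a<..} (\<lambda>x. x powr (m+1) * exp (- x))"
    using EI[of "m+1" a] assms by auto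
  have int2: "set_integrable lborel {a<..} (\<lambda>x. x powr m * exp (- x))"
    using EI assms by auto
  have fint: "set_integrable lborel (einterval (ereal a) \<infinity>) f"
    unfolding f_def using int1 int2 by (auto intro!: set_integral_diff set_integrable_mult_right)
  have "(LBINT x=ereal a..\<infinity>. f x) = 0 - F a"
  proof (rule interval_integral_FTC_integrable)
    show "ereal a < \<infinity>" by simp
    fix x assume x: "ereal a < ereal x" "ereal x < \<infinity>"
    hence xp: "x > 0" using assms by auto
    show "(F has_vector_derivative f x) (at x)"
      unfolding F_def f_def has_real_derivative_iff_has_vector_derivative[symmetric]
      using xp by (auto intro!: derivative_eq_intros simp: field_simps)
    show "isCont f x" unfolding f_def using xp by (auto intro!: continuous_intros)
  next
    show "set_integrable lborel (einterval (ereal a) \<infinity>) f" by fact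
    show "((F \<circ> real_of_ereal) \<longlongrightarrow> F a) (at_right (ereal a))"
      unfolding ereal_tendsto_simps F_def
    proof (cases "a = 0")
      case True
      have "((\<lambda>x. x powr (m+1)) \<longlongrightarrow> 0) (at_right 0)"
        by (rule tendsto_zero_powrI[where b="m+1"]) (use assms in \<open>auto intro!: tendsto_intros eventually_at_rightI[of 0 1]\<close>)
      hence "((\<lambda>x. - (x powr (m+1) * exp (-x))) \<longlongrightarrow> - (0 * exp (-0))) (at_right 0)"
        by (intro tendsto_intros)
      thus "((\<lambda>x. - (x powr (m + 1) * exp (- x))) \<longlongrightarrow> - (a powr (m + 1) * exp (- a))) (at_right a)"
        using True by simp
    next
      case False
      hence "a > 0" using assms by auto
      hence "isCont (\<lambda>x. - (x powr (m + 1) * exp (- x))) a" by (auto intro!: continuous_intros)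
      thus "((\<lambda>x. - (x powr (m + 1) * exp (- x))) \<longlongrightarrow> - (a powr (m + 1) * exp (- a))) (at_right a)"
        by (simp add: isCont_def filterlim_at_split)
    qed
    show "((F \<circ> real_of_ereal) \<longlongrightarrow> 0) (at_left \<infinity>)"
      unfolding ereal_tendsto_simps F_def using assms by real_asymp
  qed
  also have "(LBINT x=ereal a..\<infinity>. f x) = (LINT x:{a<..}|lborel. f x)"
    by (rule interval_integral_to_infinity_eq)
  also have "\<dots> = E (m+1) a - (m+1) * E m a"
    unfolding f_def E_def using int1 int2
    by (simp add: set_integral_diff set_integral_mult_right)
  finally show ?thesis unfolding F_def by simp
qed

lemma E_deriv:
  fixes m a :: real
  assumes "0 < m" "0 < a"
  shows "(E m has_real_derivative -(a powr m * exp (-a))) (at a)"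
proof -
  define c where "c = a/2"
  define b where "b = 2*a"
  define f where "f x = x powr m * exp (-x)" for x :: real
  have cp: "0 < c" "c < a" "a < b" using assms by (auto simp: c_def b_def)
  have cont: "continuous_on {c..b} f" unfolding f_def using cp
    by (auto intro!: continuous_intros)
  have d: "((\<lambda>u. LBINT y=c..u. f y) has_vector_derivative f a) (at a within {c..b})"
    by (rule interval_integral_FTC2) (use cp cont in auto)
  hence d': "((\<lambda>u. LBINT y=c..u. f y) has_real_derivative f a) (at a)"
    using cp by (simp add: at_within_Icc_at has_real_derivative_iff_has_vector_derivative)
  have eq: "E m u = E m c - (LBINT y=c..u. f y)" if "u \<in> {c<..}" for u
  proof -
    have u: "c < u" using that by auto
    have i: "set_integrable lborel {c<..} f" unfolding f_def using EI[of m c] cp assms by auto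
    have "E m c = (LINT x:{c<..u} \<union> {u<..}|lborel. f x)" unfolding E_def f_def
      using u by (simp add: ivl_disj_un)
    also have "\<dots> = (LINT x:{c<..u}|lborel. f x) + (LINT x:{u<..}|lborel. f x)"
      by (rule set_integral_Un) (use u in \<open>auto intro: set_integrable_subset[OF i]\<close>)
    also have "(LINT x:{c<..u}|lborel. f x) = (LBINT y=c..u. f y)"
      using u by (simp add: interval_integral_Ioc)
    finally show ?thesis unfolding E_def f_def by simp
  qed
  have "((\<lambda>u. E m c - (LBINT y=c..u. f y)) has_real_derivative - f a) (at a)"
    using d' by (auto intro!: derivative_eq_intros)
  hence "(E m has_real_derivative - f a) (at a)"
    by (rule has_field_derivative_transform_within_open[where S="{c<..}"]) (use cp eq in auto)
  thus ?thesis unfolding f_def by simp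
qed




lemma set_integrable_sum':
  assumes "finite I" "\<And>i. i \<in> I \<Longrightarrow> set_integrable M S (f i)"
  shows "set_integrable M S (\<lambda>x. \<Sum>i\<in>I. f i x :: real)"
  using assms
proof (induction I rule: finite_induct)
  case empty then show ?case by (simp add: set_integrable_def)
next
  case (insert i I) then show ?case by (simp add: set_integral_add(1))
qed

lemma set_integral_sum':
  assumes "finite I" "\<And>i. i \<in> I \<Longrightarrow> set_integrable M S (f i)"
  shows "(LINT x:S|M. (\<Sum>i\<in>I. f i x :: real)) = (\<Sum>i\<in>I. (LINT x:S|M. f i x))"
  using assms
proof (induction I rule: finite_induct)
  case empty then show ?case by (simp add: set_lebesgue_integral_def)
next
  case (insert i I)
  have "(LINT x:S|M. (\<Sum>i\<in>insert i I. f i x)) = (LINT x:S|M. f i x + (\<Sum>i\<in>I. f i x))"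
    using insert by simp
  also have "\<dots> = (LINT x:S|M. f i x) + (LINT x:S|M. (\<Sum>i\<in>I. f i x))"
    using insert by (intro set_integral_add(2) set_integrable_sum') auto
  finally show ?case using insert by simp
qed

lemma poly_sum_N:
  fixes p :: "real poly"
  assumes "degree p \<le> N"
  shows "poly p x = (\<Sum>i\<le>N. coeff p i * x ^ i)"
proof -
  have "poly p x = (\<Sum>i\<le>degree p. coeff p i * x ^ i)" by (rule poly_altdef)
  also have "\<dots> = (\<Sum>i\<le>N. coeff p i * x ^ i)"
    by (rule sum.mono_neutral_left) (use assms in \<open>auto simp: coeff_eq_0\<close>)
  finally show ?thesis .
qed

locale OPS =
  fixes \<alpha> A B :: real
  assumes alpha: "\<alpha> > 0" and Ann: "A \<ge> 0" and Bpos: "B > 0"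
begin

definition L :: "real \<Rightarrow> real poly \<Rightarrow> real" where
  "L s p = (LINT x:{0..}|lborel. poly p x * wgt \<alpha> A B s x)"

definition mu :: "nat \<Rightarrow> real \<Rightarrow> real" where
  "mu k s = (LINT x:{0..}|lborel. x ^ k * wgt \<alpha> A B s x)"

definition g :: "real \<Rightarrow> real" where
  "g s = B * s powr \<alpha> * exp (- s)"

lemma wgt_decomp:
  "indicator {0..} x * (x ^ k * wgt \<alpha> A B s x) =
     A * (indicator {0<..} x * (x powr (real k + \<alpha>) * exp (- x)))
   + B * (indicator {max 0 s<..} x * (x powr (real k + \<alpha>) * exp (- x)))"
proof (cases "x > 0")
  case True
  have "x powr (real k + \<alpha>) = x ^ k * x powr \<alpha>"
    using True by (simp add: powr_add powr_realpow)
  then show ?thesis using True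
    by (auto simp: wgt_def heaviside_def indicator_def algebra_simps)
next
  case False
  then show ?thesis using alpha
    by (cases "x = 0") (auto simp: wgt_def indicator_def)
qed

lemma MI: "set_integrable lborel {0..} (\<lambda>x. x ^ k * wgt \<alpha> A B s x)"
proof -
  have i1: "integrable lborel (\<lambda>x. indicator {0<..} x * (x powr (real k + \<alpha>) * exp (- x)))"
    using EI[of "real k + \<alpha>" 0] alpha by (simp add: set_integrable_def)
  have i2: "integrable lborel (\<lambda>x. indicator {max 0 s<..} x * (x powr (real k + \<alpha>) * exp (- x)))"
    using EI[of "real k + \<alpha>" "max 0 s"] alpha by (simp add: set_integrable_def)
  show ?thesis unfolding set_integrable_def
    using i1 i2 by (simp add: wgt_decomp)
qed

lemma mu_E: "mu k s = A * E (real k + \<alpha>) 0 + B * E (real k + \<alpha>) (max 0 s)"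
proof -
  have i1: "integrable lborel (\<lambda>x. indicator {0<..} x * (x powr (real k + \<alpha>) * exp (- x)))"
    using EI[of "real k + \<alpha>" 0] alpha by (simp add: set_integrable_def)
  have i2: "integrable lborel (\<lambda>x. indicator {max 0 s<..} x * (x powr (real k + \<alpha>) * exp (- x)))"
    using EI[of "real k + \<alpha>" "max 0 s"] alpha by (simp add: set_integrable_def)
  show ?thesis unfolding mu_def E_def set_lebesgue_integral_def
    using i1 i2 by (simp add: wgt_decomp)
qed

lemma PI: "set_integrable lborel {0..} (\<lambda>x. poly p x * wgt \<alpha> A B s x)"
proof -
  have "set_integrable lborel {0..} (\<lambda>x. \<Sum>i\<le>degree p. coeff p i * (x ^ i * wgt \<alpha> A B s x))"
    by (intro set_integrable_sum') (auto intro: MI)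
  thus ?thesis by (simp add: poly_altdef sum_distrib_right mult.assoc)
qed

lemma Lsum:
  assumes "degree p \<le> N"
  shows "L s p = (\<Sum>i\<le>N. coeff p i * mu i s)"
proof -
  have "L s p = (LINT x:{0..}|lborel. (\<Sum>i\<le>N. coeff p i * (x ^ i * wgt \<alpha> A B s x)))"
    unfolding L_def by (simp add: poly_sum_N[OF assms] sum_distrib_right mult.assoc)
  also have "\<dots> = (\<Sum>i\<le>N. coeff p i * mu i s)"
    by (subst set_integral_sum') (auto intro: MI simp: mu_def)
  finally show ?thesis .
qed

lemma L_add: "L s (p + q) = L s p + L s q"
  unfolding L_def by (simp add: distrib_right PI set_integral_add(2))

lemma L_diff: "L s (p - q) = L s p - L s q"
  unfolding L_def by (simp add: left_diff_distrib PI set_integral_diff(2))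

lemma L_smult: "L s (smult c p) = c * L s p"
  unfolding L_def by (simp add: mult.assoc)

lemma L_zero[simp]: "L s 0 = 0"
  unfolding L_def by simp

lemma L_minus: "L s (- p) = - L s p"
  using L_diff[of s 0 p] by simp

lemma L_sum: "finite I \<Longrightarrow> L s (\<Sum>i\<in>I. f i) = (\<Sum>i\<in>I. L s (f i))"
  by (induction I rule: finite_induct) (auto simp: L_add)

lemma L_monom: "L s ([:0,1:] ^ k) = mu k s"
  unfolding L_def mu_def by simp

lemma mu_rec:
  assumes "s > 0"
  shows "mu (Suc k) s = (real k + 1 + \<alpha>) * mu k s + s ^ Suc k * g s"
proof -
  have m: "real k + \<alpha> > 0" using alpha by simp
  have e: "real (Suc k) + \<alpha> = (real k + \<alpha>) + 1" by simp
  have p: "s powr (real k + \<alpha> + 1) = s ^ Suc k * s powr \<alpha>"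
    using assms by (simp add: powr_add powr_realpow algebra_simps)
  have r0: "E (real k + \<alpha> + 1) 0 = (real k + \<alpha> + 1) * E (real k + \<alpha>) 0"
    using E_rec[OF m, of 0] m by simp
  have r1: "E (real k + \<alpha> + 1) s = s ^ Suc k * s powr \<alpha> * exp (- s) + (real k + \<alpha> + 1) * E (real k + \<alpha>) s"
    using E_rec[OF m, of s] assms p by simp
  show ?thesis unfolding mu_E e using assms
    by (simp only: r0 r1 max_absorb2 less_imp_le) (simp add: g_def algebra_simps)
qed

lemma mu_deriv:
  assumes "t > 0"
  shows "(mu k has_real_derivative -(g t * t ^ k)) (at t)"
proof -
  have m: "real k + \<alpha> > 0" using alpha by simp
  have p: "t powr (real k + \<alpha>) = t ^ k * t powr \<alpha>"
    using assms by (simp add: powr_add powr_realpow)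
  have "((\<lambda>s. A * E (real k + \<alpha>) 0 + B * E (real k + \<alpha>) s) has_real_derivative
          B * -(t powr (real k + \<alpha>) * exp (-t))) (at t)"
    using E_deriv[OF m assms] by (auto intro!: derivative_eq_intros)
  hence "(mu k has_real_derivative B * -(t powr (real k + \<alpha>) * exp (-t))) (at t)"
    by (rule has_field_derivative_transform_within_open[where S="{0<..}"])
       (use assms in \<open>auto simp: mu_E\<close>)
  thus ?thesis by (simp only: p) (simp add: g_def algebra_simps)
qed

end



context OPS begin

lemma L_monom1: "L s (monom c k) = c * mu k s"
  unfolding L_def mu_def by (simp add: poly_monom mult.assoc)

lemma wgt_nonneg: "x \<ge> 0 \<Longrightarrow> wgt \<alpha> A B s x \<ge> 0"
  using Ann Bpos by (auto simp: wgt_def heaviside_def intro!: mult_nonneg_nonneg)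

lemma L_comm: "L s (p * q) = L s (q * p)"
  by (simp add: mult.commute)

lemma pw_nonneg: "0 \<le> indicator {0..} x * (poly (p * p) x * wgt \<alpha> A B s x)"
proof (cases "x \<ge> 0")
  case True
  have "0 \<le> poly p x * poly p x" by simp
  then show ?thesis using True wgt_nonneg[OF True, of s] by (simp add: indicator_def)
qed (simp add: indicator_def)

lemma L_sq_nonneg: "L s (p * p) \<ge> 0"
  unfolding L_def set_lebesgue_integral_def
  by (rule Bochner_Integration.integral_nonneg) (use pw_nonneg in simp)

lemma L_sq_pos:
  assumes "p \<noteq> 0"
  shows "L s (p * p) > 0"
proof (rule ccontr)
  assume "\<not> L s (p * p) > 0"
  hence z: "L s (p * p) = 0" using L_sq_nonneg[of s p] by auto
  define f where "f x = indicator {0..} x * (poly (p * p) x * wgt \<alpha> A B s x)" for x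
  have fi: "integrable lborel f" using PI[of "p*p" s] unfolding f_def set_integrable_def by simp
  have fn: "AE x in lborel. 0 \<le> f x"
    unfolding f_def using pw_nonneg by simp
  have "integral\<^sup>L lborel f = 0" using z unfolding f_def L_def set_lebesgue_integral_def by simp
  hence "AE x in lborel. f x = 0" using integral_nonneg_eq_0_iff_AE[OF fi fn] by simp
  then obtain N where N: "{x \<in> space lborel. \<not> f x = 0} \<subseteq> N" "emeasure lborel N = 0" "N \<in> sets lborel"
    by (rule AE_E)
  define c where "c = max 0 s"
  define R where "R = {x. poly p x = 0}"
  have Rf: "finite R" unfolding R_def using poly_roots_finite[OF assms] .
  have sub: "{c<..c+1} - R \<subseteq> N"
  proof
    fix x assume x: "x \<in> {c<..c+1} - R"
    hence xp: "x > 0" "x > s" "poly p x \<noteq> 0" by (auto simp: c_def R_def)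
    have "wgt \<alpha> A B s x > 0" using xp Ann Bpos
      by (auto simp: wgt_def heaviside_def intro!: mult_pos_pos add_nonneg_pos)
    moreover have "poly p x * poly p x > 0" using xp(3) by (metis not_real_square_gt_zero)
    ultimately have "f x > 0" using xp unfolding f_def by (simp add: indicator_def)
    thus "x \<in> N" using N(1) by auto
  qed
  have "emeasure lborel ({c<..c+1} - R) = emeasure lborel {c<..c+1}"
    by (rule emeasure_Diff_null_set) (use Rf in \<open>auto intro: finite_imp_null_set_lborel\<close>)
  also have "\<dots> = 1" by simp
  finally have "1 \<le> emeasure lborel N" using emeasure_mono[OF sub N(3)] by simp
  thus False using N(2) by simp
qed

lemma L_sq_eq0: "L s (p * p) = 0 \<longleftrightarrow> p = 0"
  by (metis L_sq_pos L_zero mult_zero_left less_irrefl)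

function GS :: "real \<Rightarrow> nat \<Rightarrow> real poly" where
  "GS s 0 = 1"
| "GS s (Suc n) = monom 1 (Suc n) -
     (\<Sum>j\<le>n. smult (L s (monom 1 (Suc n) * GS s j) / L s (GS s j * GS s j)) (GS s j))"
  by pat_completeness auto
termination by (relation "Wellfounded.measure snd") auto

lemma GS_props:
  "degree (GS s n) = n \<and> coeff (GS s n) n = 1 \<and> (\<forall>j<n. L s (GS s n * GS s j) = 0)"
proof (induction n rule: less_induct)
  case (less n)
  show ?case
  proof (cases n)
    case 0 then show ?thesis by simp
  next
    case (Suc m)
    define a where "a j = L s (monom 1 (Suc m) * GS s j) / L s (GS s j * GS s j)" for j
    define S where "S = (\<Sum>j\<le>m. smult (a j) (GS s j))"
    have G: "GS s n = monom 1 (Suc m) - S" unfolding Suc S_def a_def by simp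
    have IH: "\<And>j. j \<le> m \<Longrightarrow> degree (GS s j) = j \<and> coeff (GS s j) j = 1 \<and> (\<forall>i<j. L s (GS s j * GS s i) = 0)"
      using less Suc by auto
    have dS: "degree S \<le> m" unfolding S_def
      by (intro degree_sum_le) (auto intro: order.trans[OF degree_smult_le] simp: IH)
    have deg: "degree (GS s n) = Suc m"
      unfolding G by (subst diff_conv_add_uminus, subst degree_add_eq_left)
        (use dS in \<open>auto simp: degree_monom_eq\<close>)
    have "coeff (monom 1 (Suc m) - S) (Suc m) = 1" using dS by (simp add: coeff_eq_0)
    hence lc: "coeff (GS s n) n = 1" using G Suc by simp
    have orth: "L s (GS s n * GS s i) = 0" if i: "i < n" for i
    proof -
      have im: "i \<le> m" using i Suc by simp
      have nz: "GS s i \<noteq> 0" using IH[OF im] by auto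
      have pos: "L s (GS s i * GS s i) \<noteq> 0" using L_sq_pos[OF nz, of s] by simp
      have o: "L s (GS s j * GS s i) = 0" if "j \<le> m" "j \<noteq> i" for j
      proof (cases "j < i")
        case True then show ?thesis using IH[OF im] L_comm by metis
      next
        case False then show ?thesis using IH[OF that(1)] that by auto
      qed
      have "GS s n * GS s i = monom 1 (Suc m) * GS s i - (\<Sum>j\<le>m. smult (a j) (GS s j * GS s i))"
        unfolding G S_def by (simp add: left_diff_distrib sum_distrib_right)
      hence "L s (GS s n * GS s i) = L s (monom 1 (Suc m) * GS s i) - (\<Sum>j\<le>m. a j * L s (GS s j * GS s i))"
        by (simp add: L_diff L_sum L_smult)
      also have "(\<Sum>j\<le>m. a j * L s (GS s j * GS s i)) = a i * L s (GS s i * GS s i)"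
        by (subst sum.remove[of _ i]) (use im o in auto)
      also have "\<dots> = L s (monom 1 (Suc m) * GS s i)"
        unfolding a_def using pos by simp
      finally show ?thesis by simp
    qed
    show ?thesis using deg lc orth Suc by auto
  qed
qed

lemma GS_deg[simp]: "degree (GS s n) = n"
  using GS_props by blast

lemma GS_lc[simp]: "coeff (GS s n) n = 1"
  using GS_props by blast

lemma GS_nz: "GS s n \<noteq> 0"
  using GS_lc[of s n] by (metis coeff_0 zero_neq_one)

lemma GS_orth: "j < n \<Longrightarrow> L s (GS s n * GS s j) = 0"
  using GS_props by blast

lemma orth_span:
  assumes "\<And>j. j < n \<Longrightarrow> L s (p * GS s j) = 0"
  shows "degree q < n \<Longrightarrow> L s (p * q) = 0"
proof (induction "degree q" arbitrary: q rule: less_induct)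
  case less
  define d where "d = degree q"
  define r where "r = q - smult (lead_coeff q) (GS s d)"
  have dr: "degree r \<le> d" unfolding r_def d_def
    by (intro degree_diff_le) (auto intro: order.trans[OF degree_smult_le])
  have cr: "coeff r d = 0" unfolding r_def d_def by simp
  have Lr: "L s (p * r) = 0"
  proof (cases "r = 0")
    case False
    hence "degree r \<noteq> d" using cr leading_coeff_0_iff by metis
    hence "degree r < degree q" using dr d_def by simp
    thus ?thesis using less by auto
  qed simp
  have q: "q = smult (lead_coeff q) (GS s d) + r" unfolding r_def by simp
  have "L s (p * q) = lead_coeff q * L s (p * GS s d) + L s (p * r)"
    by (subst q) (simp add: distrib_left L_add L_smult)
  also have "L s (p * GS s d) = 0" using assms less d_def by simp
  finally show ?case using Lr by simp
qed

lemma GS_orth_all: "degree q < n \<Longrightarrow> L s (GS s n * q) = 0"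
  by (rule orth_span) (auto intro: GS_orth)

lemma imo_iff: "is_monic_orth \<alpha> A B s n p \<longleftrightarrow>
   degree p = n \<and> lead_coeff p = 1 \<and> (\<forall>q. degree q < n \<longrightarrow> L s (p * q) = 0)"
  unfolding is_monic_orth_def L_def by (simp add: mult.assoc)

lemma Pn_GS: "Pn \<alpha> A B n s = GS s n"
  unfolding Pn_def
proof (rule the_equality)
  show "is_monic_orth \<alpha> A B s n (GS s n)"
    unfolding imo_iff by (auto intro: GS_orth_all)
next
  fix p assume "is_monic_orth \<alpha> A B s n p"
  hence p: "degree p = n" "lead_coeff p = 1" "\<And>q. degree q < n \<Longrightarrow> L s (p * q) = 0"
    unfolding imo_iff by auto
  define d where "d = p - GS s n"
  have dd: "degree d \<le> n" unfolding d_def using p by (intro degree_diff_le) auto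
  have cd: "coeff d n = 0" unfolding d_def using p by simp
  have "L s (d * d) = 0"
  proof (cases "d = 0")
    case False
    hence "degree d \<noteq> n" using cd leading_coeff_0_iff by metis
    hence dl: "degree d < n" using dd by simp
    have "L s (d * d) = L s (p * d) - L s (GS s n * d)"
      unfolding d_def by (simp add: left_diff_distrib L_diff)
    thus ?thesis using p(3)[OF dl] GS_orth_all[OF dl] by simp
  qed simp
  hence "d = 0" using L_sq_eq0 by simp
  thus "p = GS s n" unfolding d_def by simp
qed

lemma hn_L: "hn \<alpha> A B n s = L s (GS s n * GS s n)"
  unfolding hn_def L_def Pn_GS by (simp add: power2_eq_square)

end



definition cdiff :: "(real \<Rightarrow> real poly) \<Rightarrow> real \<Rightarrow> bool" where
  "cdiff P t \<longleftrightarrow> (\<forall>k. (\<lambda>s. coeff (P s) k) differentiable (at t))"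

definition dpoly :: "(real \<Rightarrow> real poly) \<Rightarrow> real \<Rightarrow> nat \<Rightarrow> real poly" where
  "dpoly P t N = (\<Sum>k\<le>N. monom (deriv (\<lambda>s. coeff (P s) k) t) k)"

lemma cdiff_D: "cdiff P t \<Longrightarrow> ((\<lambda>s. coeff (P s) k) has_real_derivative deriv (\<lambda>s. coeff (P s) k) t) (at t)"
  unfolding cdiff_def using DERIV_deriv_iff_real_differentiable by blast

lemma coeff_dpoly: "coeff (dpoly P t N) k = (if k \<le> N then deriv (\<lambda>s. coeff (P s) k) t else 0)"
  unfolding dpoly_def by (simp add: coeff_sum coeff_monom)

lemma degree_dpoly: "degree (dpoly P t N) \<le> N"
  unfolding dpoly_def by (intro degree_sum_le) (auto intro: order.trans[OF degree_monom_le])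

lemma real_diffI: "(f has_real_derivative D) (at x) \<Longrightarrow> f differentiable (at x)"
  by (metis DERIV_deriv_iff_real_differentiable DERIV_imp_deriv)

lemma cdiff_const: "cdiff (\<lambda>s. p) t"
  unfolding cdiff_def by simp

lemma dpoly_const: "dpoly (\<lambda>s. p) t N = 0"
  unfolding dpoly_def by simp

context OPS begin

lemma L_bilin:
  assumes "degree p \<le> N" "degree q \<le> N"
  shows "L s (p * q) = (\<Sum>k\<le>N. \<Sum>l\<le>N. coeff p k * coeff q l * mu (k + l) s)"
proof -
  have "p * q = (\<Sum>k\<le>N. monom (coeff p k) k) * (\<Sum>l\<le>N. monom (coeff q l) l)"
    using poly_as_sum_of_monoms'[OF assms(1)] poly_as_sum_of_monoms'[OF assms(2)] by simp
  also have "\<dots> = (\<Sum>k\<le>N. \<Sum>l\<le>N. monom (coeff p k * coeff q l) (k + l))"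
    by (simp add: sum_product mult_monom)
  finally show ?thesis by (simp add: L_sum L_monom1)
qed

lemma D3:
  assumes t: "t > 0" and d1: "\<And>s. degree (P1 s) \<le> N" and d2: "\<And>s. degree (P2 s) \<le> N"
    and c1: "cdiff P1 t" and c2: "cdiff P2 t"
  shows "((\<lambda>s. L s (P1 s * P2 s)) has_real_derivative
            L t (dpoly P1 t N * P2 t) + L t (P1 t * dpoly P2 t N)
            - g t * poly (P1 t) t * poly (P2 t) t) (at t)"
proof -
  define c where "c k = (\<lambda>s. coeff (P1 s) k)" for k
  define e where "e k = (\<lambda>s. coeff (P2 s) k)" for k
  define c' where "c' k = deriv (c k) t" for k
  define e' where "e' k = deriv (e k) t" for k
  have dc: "(c k has_real_derivative c' k) (at t)" for k
    unfolding c_def c'_def using cdiff_D[OF c1] by simp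
  have de: "(e k has_real_derivative e' k) (at t)" for k
    unfolding e_def e'_def using cdiff_D[OF c2] by simp
  have F: "(\<lambda>s. L s (P1 s * P2 s)) = (\<lambda>s. \<Sum>k\<le>N. \<Sum>l\<le>N. c k s * e l s * mu (k + l) s)"
    unfolding c_def e_def by (intro ext, rule L_bilin[OF d1 d2])
  have "((\<lambda>s. \<Sum>k\<le>N. \<Sum>l\<le>N. c k s * e l s * mu (k + l) s) has_real_derivative
     (\<Sum>k\<le>N. \<Sum>l\<le>N. (c' k * e l t + c k t * e' l) * mu (k + l) t + c k t * e l t * (-(g t * t ^ (k + l)))))
     (at t)"
  proof (intro DERIV_sum)
    fix k l
    show "((\<lambda>s. c k s * e l s * mu (k + l) s) has_real_derivative
      (c' k * e l t + c k t * e' l) * mu (k + l) t + c k t * e l t * (-(g t * t ^ (k + l)))) (at t)"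
      by (rule DERIV_cong[OF DERIV_mult[OF DERIV_mult[OF dc de] mu_deriv[OF t]]]) (simp add: algebra_simps)
  qed
  moreover have "(\<Sum>k\<le>N. \<Sum>l\<le>N. (c' k * e l t + c k t * e' l) * mu (k + l) t + c k t * e l t * (-(g t * t ^ (k + l))))
     = L t (dpoly P1 t N * P2 t) + L t (P1 t * dpoly P2 t N) - g t * poly (P1 t) t * poly (P2 t) t"
  proof -
    have "L t (dpoly P1 t N * P2 t) = (\<Sum>k\<le>N. \<Sum>l\<le>N. c' k * e l t * mu (k + l) t)"
      by (subst L_bilin[OF degree_dpoly d2]) (simp add: coeff_dpoly c'_def c_def e_def)
    moreover have "L t (P1 t * dpoly P2 t N) = (\<Sum>k\<le>N. \<Sum>l\<le>N. c k t * e' l * mu (k + l) t)"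
      by (subst L_bilin[OF d1 degree_dpoly]) (simp add: coeff_dpoly e'_def c_def e_def)
    moreover have "g t * poly (P1 t) t * poly (P2 t) t = (\<Sum>k\<le>N. \<Sum>l\<le>N. g t * (c k t * e l t * t ^ (k + l)))"
      unfolding poly_sum_N[OF d1] poly_sum_N[OF d2] c_def e_def
      by (simp add: sum_product sum_distrib_left power_add algebra_simps)
    ultimately show ?thesis
      by (simp add: sum.distrib sum_subtractf algebra_simps)
  qed
  ultimately show ?thesis using F by simp
qed

lemma D4:
  assumes d1: "\<And>s. degree (P s) \<le> N" and c1: "cdiff P t"
  shows "((\<lambda>s. poly (P s) s) has_real_derivative
            poly (dpoly P t N) t + poly (pderiv (P t)) t) (at t)"
proof -
  define c where "c k = (\<lambda>s. coeff (P s) k)" for k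
  define c' where "c' k = deriv (c k) t" for k
  have dc: "(c k has_real_derivative c' k) (at t)" for k
    unfolding c_def c'_def using cdiff_D[OF c1] by simp
  have F: "(\<lambda>s. poly (P s) s) = (\<lambda>s. \<Sum>k\<le>N. c k s * s ^ k)"
    unfolding c_def by (intro ext, rule poly_sum_N[OF d1])
  have h: "((\<lambda>s. \<Sum>k\<le>N. c k s * s ^ k) has_real_derivative
      (\<Sum>k\<le>N. c' k * t ^ k + c k t * (real k * t ^ (k - 1)))) (at t)"
  proof (intro DERIV_sum)
    fix k
    show "((\<lambda>s. c k s * s ^ k) has_real_derivative c' k * t ^ k + c k t * (real k * t ^ (k - 1))) (at t)"
      by (rule DERIV_cong[OF DERIV_mult[OF dc DERIV_pow]]) (simp add: algebra_simps)
  qed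
  have h2: "((\<lambda>x. \<Sum>k\<le>N. c k t * x ^ k) has_real_derivative
      (\<Sum>k\<le>N. c k t * (real k * t ^ (k - 1)))) (at t)"
  proof (intro DERIV_sum)
    fix k
    show "((\<lambda>x. c k t * x ^ k) has_real_derivative c k t * (real k * t ^ (k - 1))) (at t)"
      by (rule DERIV_cong[OF DERIV_cmult[OF DERIV_pow]]) simp
  qed
  have "(\<lambda>x. \<Sum>k\<le>N. c k t * x ^ k) = (\<lambda>x. poly (P t) x)"
    unfolding c_def by (intro ext, rule poly_sum_N[OF d1, symmetric])
  hence "(\<Sum>k\<le>N. c k t * (real k * t ^ (k - 1))) = poly (pderiv (P t)) t"
    using h2 poly_DERIV[of "P t" t] DERIV_unique by metis
  moreover have "poly (dpoly P t N) t = (\<Sum>k\<le>N. c' k * t ^ k)"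
    unfolding dpoly_def c'_def c_def by (simp add: poly_sum poly_monom)
  ultimately show ?thesis using h F by (simp add: sum.distrib)
qed

lemma GS_cdiff:
  assumes t: "t > 0"
  shows "cdiff (\<lambda>s. GS s n) t"
proof (induction n rule: less_induct)
  case (less n)
  show ?case
  proof (cases n)
    case 0 then show ?thesis by (simp add: cdiff_def)
  next
    case (Suc m)
    have num: "(\<lambda>s. L s (monom 1 (Suc m) * GS s j)) differentiable (at t)" if "j \<le> m" for j
      by (rule real_diffI, rule D3[where N="Suc m", OF t])
         (use that less Suc in \<open>auto simp: cdiff_const degree_monom_le\<close>)
    have den: "(\<lambda>s. L s (GS s j * GS s j)) differentiable (at t)" if "j \<le> m" for j
      by (rule real_diffI, rule D3[where N="Suc m", OF t])
         (use that less Suc in auto)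
    have nz: "L t (GS t j * GS t j) \<noteq> 0" for j
      using L_sq_pos[OF GS_nz[of t j], of t] by simp
    have cf: "(\<lambda>s. coeff (GS s j) k) differentiable (at t)" if "j \<le> m" for j k
      using less[of j] that Suc unfolding cdiff_def by auto
    show ?thesis unfolding cdiff_def
    proof
      fix k
      have "(\<lambda>s. coeff (monom 1 (Suc m)) k -
          (\<Sum>j\<le>m. L s (monom 1 (Suc m) * GS s j) / L s (GS s j * GS s j) * coeff (GS s j) k))
           differentiable (at t)"
        using num den nz cf by (intro differentiable_diff differentiable_const differentiable_sum) auto
      moreover have "(\<lambda>s. coeff (GS s n) k) = (\<lambda>s. coeff (monom 1 (Suc m)) k -
          (\<Sum>j\<le>m. L s (monom 1 (Suc m) * GS s j) / L s (GS s j * GS s j) * coeff (GS s j) k))"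
        unfolding Suc by (simp add: coeff_sum)
      ultimately show "(\<lambda>s. coeff (GS s n) k) differentiable (at t)" by simp
    qed
  qed
qed

end



lemma pderiv_sum': "finite I \<Longrightarrow> pderiv (\<Sum>i\<in>I. f i) = (\<Sum>i\<in>I. pderiv (f i))"
  by (induction I rule: finite_induct) (auto simp: pderiv_add)

lemma smult_sum_right': "smult c (\<Sum>i\<in>I. f i) = (\<Sum>i\<in>I. smult c (f i))"
  by (induction I rule: infinite_finite_induct) (auto simp: smult_add_right)

lemma X_pderiv_monom: "monom 1 1 * pderiv (monom c k) = smult (of_nat k) (monom c k)"
  by (cases k) (simp_all add: pderiv_monom mult_monom smult_monom)

context OPS begin

definition Phi :: "real poly \<Rightarrow> real poly" where
  "Phi f = smult (\<alpha> + 1) f + monom 1 1 * pderiv f - monom 1 1 * f"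

lemma Phi_monom: "Phi (monom c k) = smult (c * (\<alpha> + 1 + real k)) (monom 1 k) - monom c (Suc k)"
  unfolding Phi_def X_pderiv_monom by (simp add: smult_monom mult_monom add_monom algebra_simps)

lemma L_Phi:
  assumes s: "s > 0"
  shows "L s (Phi f) = - (s * g s * poly f s)"
proof -
  define N where "N = degree f"
  have f: "f = (\<Sum>k\<le>N. monom (coeff f k) k)" unfolding N_def by (simp add: poly_as_sum_of_monoms)
  have "Phi f = (\<Sum>k\<le>N. Phi (monom (coeff f k) k))"
    by (subst f) (simp add: Phi_def pderiv_sum' sum_distrib_left smult_sum_right' sum.distrib sum_subtractf)
  hence "L s (Phi f) = (\<Sum>k\<le>N. L s (Phi (monom (coeff f k) k)))" by (simp add: L_sum)
  also have "\<dots> = (\<Sum>k\<le>N. - (s * g s * (coeff f k * s ^ k)))"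
  proof (rule sum.cong)
    fix k
    show "L s (Phi (monom (coeff f k) k)) = - (s * g s * (coeff f k * s ^ k))"
      unfolding Phi_monom using mu_rec[OF s, of k]
      by (simp add: L_diff L_smult L_monom1 algebra_simps)
  qed simp
  also have "\<dots> = - (s * g s * poly f s)"
    unfolding poly_sum_N[of f N, OF eq_refl[OF N_def[symmetric]]]
    by (simp add: sum_distrib_left sum_negf)
  finally show ?thesis .
qed

lemma L_Xpderiv:
  assumes s: "s > 0"
  shows "L s (monom 1 1 * pderiv P * monom 1 j) =
     - (s * g s * poly P s * s ^ j) - (\<alpha> + 1 + real j) * L s (P * monom 1 j) + L s (P * monom 1 (Suc j))"
proof -
  have e: "monom 1 1 * pderiv P * monom 1 j =
      Phi (P * monom 1 j) - smult (\<alpha> + 1 + real j) (P * monom 1 j) + P * monom 1 (Suc j)"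
  proof -
    have "monom 1 1 * pderiv (P * monom 1 j) = P * (monom 1 1 * pderiv (monom 1 j)) + monom 1 1 * pderiv P * monom 1 j"
      by (simp add: pderiv_mult algebra_simps)
    also have "monom 1 1 * pderiv (monom (1::real) j) = smult (real j) (monom 1 j)"
      by (rule X_pderiv_monom)
    finally have a: "monom 1 1 * pderiv (P * monom 1 j) = smult (real j) (P * monom 1 j) + monom 1 1 * pderiv P * monom 1 j"
      by simp
    have b: "monom 1 1 * (P * monom 1 j) = P * monom 1 (Suc j)"
      by (simp add: mult_monom algebra_simps)
    show ?thesis unfolding Phi_def a b
      by (simp add: algebra_simps smult_add_left)
  qed
  show ?thesis unfolding e using L_Phi[OF s, of "P * monom 1 j"]
    by (simp add: L_add L_diff L_smult poly_monom)
qed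

lemma L_mon_span:
  assumes "\<And>j. j < n \<Longrightarrow> L s (p * monom 1 j) = 0" "degree q < n"
  shows "L s (p * q) = 0"
proof -
  have q: "q = (\<Sum>j\<le>degree q. smult (coeff q j) (monom 1 j))"
    by (simp add: smult_monom poly_as_sum_of_monoms)
  have "L s (p * q) = (\<Sum>j\<le>degree q. coeff q j * L s (p * monom 1 j))"
    by (subst q) (simp add: sum_distrib_left L_sum L_smult)
  also have "\<dots> = 0" using assms by (intro sum.neutral) auto
  finally show ?thesis .
qed

lemma L_GS_monom: "L s (GS s m * monom 1 m) = L s (GS s m * GS s m)"
proof -
  define d where "d = GS s m - monom 1 m"
  have dd: "degree d \<le> m" unfolding d_def by (intro degree_diff_le) (auto simp: degree_monom_le)
  have cd: "coeff d m = 0" unfolding d_def by simp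
  have "L s (GS s m * d) = 0"
  proof (cases "d = 0")
    case False
    hence "degree d \<noteq> m" using cd leading_coeff_0_iff by metis
    hence "degree d < m" using dd by simp
    thus ?thesis by (rule GS_orth_all)
  qed simp
  moreover have "GS s m * GS s m = GS s m * monom 1 m + GS s m * d"
    unfolding d_def by (simp add: algebra_simps)
  ultimately show ?thesis by (simp add: L_add)
qed

end



context OPS begin

lemma main:
  assumes t: "t > 0" and n: "n \<ge> 1"
  shows "\<exists>D. ((\<lambda>s. Rn \<alpha> A B n s) has_real_derivative D) (at t) \<and>
             t * D = 2 * rn \<alpha> A B n t
                     + (2 * real n + \<alpha> - t + t * Rn \<alpha> A B n t) * Rn \<alpha> A B n t"
proof -
  define Q where "Q = dpoly (\<lambda>s. GS s n) t n"
  define p' where "p' = pderiv (GS t n)"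
  define u where "u = poly (GS t n) t"
  define v where "v = poly (GS t (n - 1)) t"
  define h where "h = L t (GS t n * GS t n)"
  define h1 where "h1 = L t (GS t (n - 1) * GS t (n - 1))"
  define G where "G = g t"
  have hpos: "h > 0" unfolding h_def using L_sq_pos[OF GS_nz] .
  have h1pos: "h1 > 0" unfolding h1_def using L_sq_pos[OF GS_nz] .
  have cd: "cdiff (\<lambda>s. GS s n) t" using GS_cdiff[OF t] .
  have cQ: "coeff Q n = 0"
  proof -
    have "deriv (\<lambda>s. coeff (GS s n) n) t = 0"
      by (simp add: DERIV_imp_deriv)
    thus ?thesis unfolding Q_def by (simp add: coeff_dpoly)
  qed
  have dQ: "degree Q < n"
  proof (cases "Q = 0")
    case True then show ?thesis using n by simp
  next
    case False
    hence "degree Q \<noteq> n" using cQ leading_coeff_0_iff by metis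
    thus ?thesis using degree_dpoly[of "\<lambda>s. GS s n" t n] unfolding Q_def by simp
  qed
  have LQ: "L t (GS t n * Q) = 0" using GS_orth_all[OF dQ] .
  have F2: "L t (Q * monom 1 j) = G * u * t ^ j" if j: "j < n" for j
  proof -
    have d: "((\<lambda>s. L s (GS s n * monom 1 j)) has_real_derivative
        L t (Q * monom 1 j) + L t (GS t n * dpoly (\<lambda>s. monom 1 j) t n) - g t * poly (GS t n) t * poly (monom 1 j) t) (at t)"
      unfolding Q_def
      by (rule D3[OF t]) (use j in \<open>auto simp: cd cdiff_const degree_monom_le intro: order.trans[OF degree_monom_le]\<close>)
    have z: "(\<lambda>s. L s (GS s n * monom 1 j)) = (\<lambda>s. 0)"
      by (rule ext, rule GS_orth_all) (use j in \<open>simp add: degree_monom_le order.strict_trans1[OF degree_monom_le]\<close>)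
    have "L t (Q * monom 1 j) + L t (GS t n * dpoly (\<lambda>s. monom 1 j) t n) - g t * poly (GS t n) t * poly (monom 1 j) t = 0"
      using d unfolding z using DERIV_unique DERIV_const by metis
    thus ?thesis by (simp add: dpoly_const u_def G_def poly_monom)
  qed
  define T where "T = monom 1 1 * p' + smult t Q - smult (real n) (GS t n) - smult (h / h1) (GS t (n - 1))"
  have LT: "L t (T * monom 1 j) = 0" if j: "j < n" for j
  proof -
    have e: "T * monom 1 j = monom 1 1 * pderiv (GS t n) * monom 1 j + smult t (Q * monom 1 j)
       - smult (real n) (GS t n * monom 1 j) - smult (h / h1) (GS t (n - 1) * monom 1 j)"
      unfolding T_def p'_def by (simp add: algebra_simps)
    have a: "L t (GS t n * monom 1 j) = 0"
      by (rule GS_orth_all) (use j in \<open>simp add: order.strict_trans1[OF degree_monom_le]\<close>)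
    have b: "L t (GS t n * monom 1 (Suc j)) = (if Suc j = n then h else 0)"
    proof (cases "Suc j = n")
      case True then show ?thesis using L_GS_monom h_def by auto
    next
      case False
      hence "Suc j < n" using j by simp
      then show ?thesis using False
        by (auto intro!: GS_orth_all intro: order.strict_trans1[OF degree_monom_le])
    qed
    have c: "L t (GS t (n - 1) * monom 1 j) = (if j = n - 1 then h1 else 0)"
    proof (cases "j = n - 1")
      case True then show ?thesis using L_GS_monom h1_def by auto
    next
      case False
      hence "j < n - 1" using j by simp
      then show ?thesis using False
        by (auto intro!: GS_orth_all intro: order.strict_trans1[OF degree_monom_le])
    qed
    have "L t (T * monom 1 j) = - (t * G * u * t ^ j) + L t (GS t n * monom 1 (Suc j))
       + t * (G * u * t ^ j) - (h / h1) * L t (GS t (n - 1) * monom 1 j)"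
      unfolding e using L_Xpderiv[OF t, of "GS t n" j] a F2[OF j]
      by (simp add: L_add L_diff L_smult G_def u_def)
    also have "\<dots> = 0" unfolding b c using h1pos j by auto
    finally show ?thesis .
  qed
  have cT: "coeff T n = 0"
  proof -
    have "coeff (monom 1 1 * p') n = real n"
      using n unfolding p'_def by (simp add: coeff_monom_mult coeff_pderiv)
    moreover have "coeff (GS t (n - 1)) n = 0" using n by (simp add: coeff_eq_0)
    ultimately show ?thesis unfolding T_def using cQ by simp
  qed
  have degT: "degree T \<le> n"
  proof -
    have "degree (monom 1 1 * p') \<le> n"
    proof -
      have "degree (monom 1 1 * p') \<le> degree (monom (1::real) 1) + degree p'" by (rule degree_mult_le)
      also have "\<dots> \<le> 1 + (n - 1)" unfolding p'_def by (simp add: degree_pderiv degree_monom_le)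
      finally show ?thesis using n by simp
    qed
    moreover have "degree (smult t Q) \<le> n" using dQ by (simp add: order.trans[OF degree_smult_le])
    moreover have "degree (smult (real n) (GS t n)) \<le> n" by (simp add: order.trans[OF degree_smult_le])
    moreover have "degree (smult (h / h1) (GS t (n - 1))) \<le> n" by (rule order.trans[OF degree_smult_le]) simp
    ultimately show ?thesis unfolding T_def by (intro degree_diff_le degree_add_le)
  qed
  have dT: "degree T < n"
  proof (cases "T = 0")
    case True then show ?thesis using n by simp
  next
    case False
    hence "degree T \<noteq> n" using cT leading_coeff_0_iff by metis
    thus ?thesis using degT by simp
  qed
  have "L t (T * T) = 0" by (rule L_mon_span[OF LT dT])
  hence "T = 0" using L_sq_eq0 by simp
  hence "poly T t = 0" by simp
  hence key: "t * (poly Q t + poly p' t) = real n * u + (h / h1) * v"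
    unfolding T_def u_def v_def by (simp add: poly_monom algebra_simps)
  define gd where "gd = B * (\<alpha> * t powr (\<alpha> - 1) * exp (- t) - t powr \<alpha> * exp (- t))"
  have dg: "(g has_real_derivative gd) (at t)"
    unfolding g_def gd_def using t
    by (auto intro!: derivative_eq_intros simp: algebra_simps)
  have tg: "t * gd = (\<alpha> - t) * G"
  proof -
    have "t * t powr (\<alpha> - 1) = t powr \<alpha>" using t by (simp add: powr_diff)
    thus ?thesis unfolding gd_def G_def g_def by (simp add: algebra_simps)
  qed
  have du: "((\<lambda>s. poly (GS s n) s) has_real_derivative poly Q t + poly p' t) (at t)"
    unfolding Q_def p'_def by (rule D4[OF _ cd]) simp
  have dh: "((\<lambda>s. L s (GS s n * GS s n)) has_real_derivative - (G * u * u)) (at t)"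
  proof -
    have "((\<lambda>s. L s (GS s n * GS s n)) has_real_derivative
        L t (Q * GS t n) + L t (GS t n * Q) - g t * poly (GS t n) t * poly (GS t n) t) (at t)"
      unfolding Q_def by (rule D3[OF t _ _ cd cd]) simp_all
    moreover have "L t (Q * GS t n) = 0" using LQ L_comm by metis
    ultimately show ?thesis using LQ by (simp add: G_def u_def)
  qed
  have Req: "(\<lambda>s. Rn \<alpha> A B n s) = (\<lambda>s. g s * poly (GS s n) s ^ 2 / L s (GS s n * GS s n))"
    by (rule ext) (simp add: Rn_def Pn_GS hn_L g_def)
  define D where "D = ((gd * u ^ 2 + 2 * (poly Q t + poly p' t) * u * G) * h + G * u ^ 2 * (G * u * u)) / (h * h)"
  have dR: "((\<lambda>s. Rn \<alpha> A B n s) has_real_derivative D) (at t)"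
    unfolding Req
    by (rule DERIV_cong[OF DERIV_divide[OF DERIV_mult[OF dg DERIV_power[OF du]] dh]])
       (use hpos in \<open>simp_all add: D_def u_def h_def G_def algebra_simps\<close>)
  have Rt: "Rn \<alpha> A B n t = G * u ^ 2 / h"
    by (simp add: Rn_def Pn_GS hn_L g_def G_def u_def h_def)
  have rt: "rn \<alpha> A B n t = G * u * v / h1"
    by (simp add: rn_def Pn_GS hn_L g_def G_def u_def v_def h1_def)
  have "t * D = ((t * gd) * u ^ 2 + 2 * (t * (poly Q t + poly p' t)) * u * G) / h + t * (G * u ^ 2 / h) ^ 2"
    unfolding D_def using hpos by (simp add: field_simps power2_eq_square)
  also have "\<dots> = 2 * (G * u * v / h1) + (2 * real n + \<alpha> - t + t * (G * u ^ 2 / h)) * (G * u ^ 2 / h)"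
    unfolding tg key using hpos h1pos by (simp add: field_simps power2_eq_square)
  finally show ?thesis using dR Rt rt by auto
qed

end


theorem lemma11:
  fixes \<alpha> A B t :: real and n :: nat
  assumes "\<alpha> > 0" and "A \<ge> 0" and "B > 0" and "t > 0" and "n \<ge> 1"
  shows "\<exists>D. ((\<lambda>s. Rn \<alpha> A B n s) has_real_derivative D) (at t) \<and>
             t * D = 2 * rn \<alpha> A B n t
                     + (2 * real n + \<alpha> - t + t * Rn \<alpha> A B n t) * Rn \<alpha> A B n t"
proof -
  interpret OPS \<alpha> A B using assms by unfold_locales auto
  show ?thesis using main[OF assms(4,5)] .
qed

end
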